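(* Let $T$ be a map on $[0,1]$ and $\nu$ a $T$-invariant exponentially mixing probability measure. Let $h>0$ and $\epsilon>0$. For $n\in\mathbb N$, $N\le 2^n$ and distinct balls $B_1,\dots,B_N$ with $|B_i|=2^{-n}$ and $\nu(B_i)\ge2^{-n(h-\epsilon)}$ for all $i$, set $\mathcal C_{n,N,h}=\{x\in[0,1]:\exists\,1\le i\le N\text{ such that }\tau(x,B_i)\ge2^{nh}\}$. Then there exists an integer $n_h$, independent of $N$, such that for every $n\ge n_h$ (and every such choice of $N$ and balls), $\nu(\mathcal C_{n,N,h})\le2^{-n}$.
   Context: A $T$-invariant measure $\nu$ on $[0,1]$ is exponentially mixing if there exist constants $C>0$ and $0<\beta<1$ such that for every ball $A$, every Borel set $B$ and every $n\ge1$, $|\nu(A\cap T^{-n}B)-\nu(A)\nu(B)|\le C\beta^n\nu(B)$. $|B|$ denotes the diameter of $B$. For a ball $B$, the first hitting time is $\tau(x,B)=\inf\{n\ge1:T^nx\in B\}$, with $\tau(x,B)=\infty$ if no such $n$ exists. *)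

theory Defs
  imports "HOL-Probability.Probability"
begin

definition unit_ball :: "real set \<Rightarrow> bool" where
  "unit_ball A \<longleftrightarrow> (\<exists>c r. c \<in> {0..1} \<and> r > 0 \<and> A = ball c r \<inter> {0..1})"

text \<open>nu is a probability measure on [0,1] (a Borel probability on the reals concentrated on [0,1]),
  T is a Borel map of [0,1] into itself, and nu is T-invariant.\<close>
definition invariant_prob :: "(real \<Rightarrow> real) \<Rightarrow> real measure \<Rightarrow> bool" where
  "invariant_prob T \<nu> \<longleftrightarrow>
     prob_space \<nu> \<and> sets \<nu> = sets borel \<and> measure \<nu> {0..1} = 1 \<and>
     T \<in> borel_measurable borel \<and> T ` {0..1} \<subseteq> {0..1} \<and>
     (\<forall>B \<in> sets borel. measure \<nu> (T -` B) = measure \<nu> B)"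

definition exp_mixing :: "(real \<Rightarrow> real) \<Rightarrow> real measure \<Rightarrow> bool" where
  "exp_mixing T \<nu> \<longleftrightarrow>
     (\<exists>C \<beta>. C > 0 \<and> 0 < \<beta> \<and> \<beta> < 1 \<and>
        (\<forall>A B n. unit_ball A \<longrightarrow> B \<in> sets borel \<longrightarrow> n \<ge> 1 \<longrightarrow>
           \<bar>measure \<nu> (A \<inter> (T ^^ n) -` B) - measure \<nu> A * measure \<nu> B\<bar>
              \<le> C * \<beta> ^ n * measure \<nu> B))"

definition hitting_time :: "(real \<Rightarrow> real) \<Rightarrow> real set \<Rightarrow> real \<Rightarrow> ereal" where
  "hitting_time T B x =
     (if \<exists>n::nat. n \<ge> 1 \<and> (T ^^ n) x \<in> B
      then ereal (real (LEAST n::nat. n \<ge> 1 \<and> (T ^^ n) x \<in> B)) else \<infinity>)"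

definition C_set :: "(real \<Rightarrow> real) \<Rightarrow> nat \<Rightarrow> nat \<Rightarrow> real \<Rightarrow> (nat \<Rightarrow> real set) \<Rightarrow> real set" where
  "C_set T n N h B = {x \<in> {0..1}. \<exists>i \<in> {1..N}. hitting_time T (B i) x \<ge> ereal (2 powr (real n * h))}"

end

theory Submission
  imports Defs "HOL-Real_Asymp.Real_Asymp"
begin

fun avoid :: "(real \<Rightarrow> real) \<Rightarrow> nat \<Rightarrow> real set \<Rightarrow> nat \<Rightarrow> real set" where
  "avoid T g B 0 = UNIV"
| "avoid T g B (Suc m) = (T ^^ g) -` (- B \<inter> avoid T g B m)"

lemma funpow_meas:
  fixes T :: "real \<Rightarrow> real"
  assumes "T \<in> borel_measurable borel" shows "(T ^^ k) \<in> borel_measurable borel"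
proof (induction k)
  case 0
  have "T ^^ 0 = id" by (rule ext) simp
  then show ?case by (simp only: measurable_ident)
next
  case (Suc k) then show ?case using measurable_comp[OF Suc assms] by (simp add: comp_def)
qed

lemma funpow_inv:
  fixes T :: "real \<Rightarrow> real"
  assumes "T \<in> borel_measurable borel" "\<forall>B \<in> sets borel. measure \<nu> (T -` B) = measure \<nu> B"
    "S \<in> sets borel"
  shows "measure \<nu> ((T ^^ k) -` S) = measure \<nu> S"
proof (induction k)
  case 0 then show ?case by simp
next
  case (Suc k)
  have eq: "(T ^^ Suc k) -` S = T -` ((T ^^ k) -` S)" by (metis funpow_Suc_right vimage_comp)
  have "(T ^^ k) -` S \<in> sets borel" using measurable_sets_borel[OF funpow_meas[OF assms(1)] assms(3)] .
  then have "measure \<nu> (T -` ((T^^k)-`S)) = measure \<nu> ((T^^k)-`S)" using assms(2) by blast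
  then show ?case unfolding eq using Suc.IH by linarith
qed

lemma avoid_mem: "x \<in> avoid T g B m \<longleftrightarrow> (\<forall>j\<in>{1..m}. (T ^^ (j*g)) x \<notin> B)"
proof (induction m arbitrary: x)
  case 0 show ?case by simp
next
  case (Suc m)
  have eq: "(T ^^ (j*g)) ((T^^g) x) = (T^^(Suc j * g)) x" for j
    by (simp only: mult_Suc add.commute[of g] funpow_add comp_apply)
  have "x \<in> avoid T g B (Suc m) \<longleftrightarrow> (T^^g) x \<notin> B \<and> (\<forall>j\<in>{1..m}. (T ^^ (Suc j*g)) x \<notin> B)"
    using Suc eq by simp
  also have "\<dots> \<longleftrightarrow> (\<forall>j\<in>{1..Suc m}. (T ^^ (j*g)) x \<notin> B)"
  proof safe
    fix j assume "(T^^g) x \<notin> B" "\<forall>j\<in>{1..m}. (T ^^ (Suc j*g)) x \<notin> B" "j \<in> {1..Suc m}" "(T ^^ (j*g)) x \<in> B"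
    note pr = this
    show False
    proof (cases "j = 1")
      case True then show False using pr by simp
    next
      case False
      then obtain j' where "j = Suc j'" "j' \<in> {1..m}" using pr(3) by (cases j) auto
      then show False using pr by blast
    qed
  next
    assume "\<forall>j\<in>{1..Suc m}. (T ^^ (j*g)) x \<notin> B" "(T^^g) x \<in> B"
    then show False by (metis atLeastAtMost_iff le_add1 mult_1 plus_1_eq_Suc order_refl)
  next
    fix j assume "\<forall>j\<in>{1..Suc m}. (T ^^ (j*g)) x \<notin> B" "j \<in> {1..m}" "(T ^^ (Suc j*g)) x \<in> B"
    then show False by (metis Suc_le_mono atLeastAtMost_iff le_SucI)
  qed
  finally show ?case .
qed

lemma unit_ball_sets: "unit_ball B \<Longrightarrow> B \<in> sets borel"
  unfolding unit_ball_def by auto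

lemma avoid_sets: "T \<in> borel_measurable borel \<Longrightarrow> B \<in> sets borel \<Longrightarrow> avoid T g B m \<in> sets borel"
proof (induction m)
  case 0 then show ?case by simp
next
  case (Suc m)
  then show ?case using measurable_sets_borel[OF funpow_meas[OF Suc.prems(1)], of "- B \<inter> avoid T g B m" g]
    by auto
qed

lemma avoid_bound:
  assumes inv: "invariant_prob T \<nu>" and Bb: "unit_ball B" and C: "C > 0" "\<beta> > 0"
   and mix: "\<forall>A B n. unit_ball A \<longrightarrow> B \<in> sets borel \<longrightarrow> n \<ge> 1 \<longrightarrow>
           \<bar>measure \<nu> (A \<inter> (T ^^ n) -` B) - measure \<nu> A * measure \<nu> B\<bar>
              \<le> C * \<beta> ^ n * measure \<nu> B"
   and g: "g \<ge> 1"
  shows "measure \<nu> (avoid T g B m) \<le> (1 - measure \<nu> B + C * \<beta> ^ g) ^ m"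
proof -
  have ps: "prob_space \<nu>" and se: "sets \<nu> = sets borel" and Tm: "T \<in> borel_measurable borel"
    and ti: "\<forall>B \<in> sets borel. measure \<nu> (T -` B) = measure \<nu> B"
    using inv unfolding invariant_prob_def by auto
  interpret prob_space \<nu> by (rule ps)
  have sp: "space \<nu> = UNIV" using sets_eq_imp_space_eq[OF se] by simp
  have Bs: "B \<in> sets borel" by (rule unit_ball_sets[OF Bb])
  have Es: "avoid T g B k \<in> sets borel" for k by (rule avoid_sets[OF Tm Bs])
  define q where "q = 1 - measure \<nu> B + C * \<beta> ^ g"
  have cb: "C * \<beta> ^ g > 0" using C by simp
  have q0: "q \<ge> 0" unfolding q_def using prob_le_1[of B] cb by linarith
  have low: "measure \<nu> (avoid T g B k \<inter> B) \<ge> (measure \<nu> B - C * \<beta> ^ g) * measure \<nu> (avoid T g B k)" for k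
  proof (cases k)
    case 0
    have "measure \<nu> (avoid T g B k) = 1" using 0 prob_space sp by simp
    then show ?thesis using 0 cb by simp
  next
    case (Suc k')
    define F where "F = - B \<inter> avoid T g B k'"
    have Fs: "F \<in> sets borel" unfolding F_def using Bs Es by auto
    have Ek: "avoid T g B k = (T ^^ g) -` F" using Suc F_def by simp
    have mF: "measure \<nu> F = measure \<nu> (avoid T g B k)" using Ek funpow_inv[OF Tm ti Fs] by simp
    have "\<bar>measure \<nu> (B \<inter> (T ^^ g) -` F) - measure \<nu> B * measure \<nu> F\<bar> \<le> C * \<beta> ^ g * measure \<nu> F"
      using mix Bb Fs g by blast
    then show ?thesis using Ek mF by (simp add: algebra_simps Int_commute)
  qed
  have step: "measure \<nu> (avoid T g B (Suc k)) \<le> q * measure \<nu> (avoid T g B k)" for k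
  proof -
    have "measure \<nu> (avoid T g B (Suc k)) = measure \<nu> (- B \<inter> avoid T g B k)"
      unfolding avoid.simps by (rule funpow_inv[OF Tm ti]) (use Bs Es in auto)
    also have "- B \<inter> avoid T g B k = avoid T g B k - B" by auto
    also have "measure \<nu> \<dots> = measure \<nu> (avoid T g B k) - measure \<nu> (avoid T g B k \<inter> B)"
      using finite_measure_Diff' Es Bs se by simp
    also have "\<dots> \<le> q * measure \<nu> (avoid T g B k)" using low[of k] unfolding q_def by (simp add: algebra_simps)
    finally show ?thesis .
  qed
  show ?thesis unfolding q_def[symmetric]
  proof (induction m)
    case 0 then show ?case using prob_le_1 by simp
  next
    case (Suc m)
    have "measure \<nu> (avoid T g B (Suc m)) \<le> q * measure \<nu> (avoid T g B m)" by (rule step)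
    also have "\<dots> \<le> q * q ^ m" using Suc q0 by (simp add: mult_left_mono)
    finally show ?case by simp
  qed
qed

lemma nat_ceil_le: "0 \<le> (y::real) \<Longrightarrow> real (nat \<lceil>y\<rceil>) \<le> y + 1"
  by (simp add: of_int_ceiling_le_add_one)

lemma nat_ceil_ge: "(y::real) \<le> real (nat \<lceil>y\<rceil>)"
proof -
  have "y \<le> of_int \<lceil>y\<rceil>" by (rule le_of_int_ceiling)
  moreover have "(of_int \<lceil>y\<rceil> :: real) \<le> real (nat \<lceil>y\<rceil>)" by (cases "\<lceil>y\<rceil> \<ge> 0") auto
  ultimately show ?thesis by linarith
qed

lemma hit_avoid:
  assumes "hitting_time T B x \<ge> ereal K" "real (m * g) < K" "g \<ge> 1"
  shows "x \<in> avoid T g B m"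
  unfolding avoid_mem
proof (intro ballI notI)
  fix j assume j: "j \<in> {1..m}" and inB: "(T ^^ (j*g)) x \<in> B"
  show False
  proof -
    have k1: "j * g \<ge> 1" using j assms(3) by simp
    then have ex: "\<exists>n::nat. n \<ge> 1 \<and> (T ^^ n) x \<in> B" using inB by blast
    have "(LEAST n::nat. n \<ge> 1 \<and> (T ^^ n) x \<in> B) \<le> j * g" using k1 inB by (intro Least_le) simp
    moreover have "j * g \<le> m * g" using j by simp
    ultimately have "real (LEAST n::nat. n \<ge> 1 \<and> (T ^^ n) x \<in> B) < K" using assms(2)
      by (metis le_trans of_nat_le_iff order_le_less_trans)
    then show False using assms(1) ex by (simp add: hitting_time_def)
  qed
qed

theorem lemma5p3:
  fixes T :: "real \<Rightarrow> real" and \<nu> :: "real measure" and h \<epsilon> :: real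
  assumes "invariant_prob T \<nu>" and "exp_mixing T \<nu>" and "h > 0" and "\<epsilon> > 0"
  shows "\<exists>n\<^sub>h::nat. \<forall>n N (B :: nat \<Rightarrow> real set). n \<ge> n\<^sub>h \<longrightarrow> N \<le> 2 ^ n \<longrightarrow>
           inj_on B {1..N} \<longrightarrow>
           (\<forall>i \<in> {1..N}. unit_ball (B i) \<and> diameter (B i) = 2 powr (- real n)
                         \<and> measure \<nu> (B i) \<ge> 2 powr (- real n * (h - \<epsilon>))) \<longrightarrow>
           measure \<nu> (C_set T n N h B) \<le> 2 powr (- real n)"
proof -
  obtain C \<beta> where C: "C > 0" "0 < \<beta>" "\<beta> < 1" and
    mix: "\<forall>A B n. unit_ball A \<longrightarrow> B \<in> sets borel \<longrightarrow> n \<ge> 1 \<longrightarrow>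
           \<bar>measure \<nu> (A \<inter> (T ^^ n) -` B) - measure \<nu> A * measure \<nu> B\<bar>
              \<le> C * \<beta> ^ n * measure \<nu> B"
    using assms(2) unfolding exp_mixing_def by blast
  have ps: "prob_space \<nu>" and se: "sets \<nu> = sets borel" and Tm: "T \<in> borel_measurable borel"
    using assms(1) unfolding invariant_prob_def by auto
  interpret prob_space \<nu> by (rule ps)
  define e where "e = min \<epsilon> (h/2)"
  define a where "a = h - e"
  have e0: "e > 0" using assms unfolding e_def by simp
  have a0: "a > 0" "a \<ge> h - \<epsilon>" "a + e = h" unfolding a_def e_def using assms by auto
  define L where "L = ln (2::real)"
  have L0: "L > 0" unfolding L_def by simp
  define lb where "lb = - ln \<beta>"
  have lb0: "lb > 0" unfolding lb_def using C by simp
  define c0 where "c0 = ln (2 * C)"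
  define G0 where "G0 = \<bar>c0\<bar> / lb + 2"
  define G1 where "G1 = a * L / lb"
  have G0: "G0 > 0" unfolding G0_def using lb0 by (simp add: add_nonneg_pos)
  have G1: "G1 > 0" unfolding G1_def using lb0 L0 a0 by simp
  have "eventually (\<lambda>x::real. (4*x*L+1)*(G0+G1*x) < 2 powr (x*e)) at_top"
    using e0 L0 G0 G1 by real_asymp
  then obtain X where X: "\<And>x. x \<ge> X \<Longrightarrow> (4*x*L+1)*(G0+G1*x) < 2 powr (x*e)"
    by (auto simp: eventually_at_top_linorder)
  define gg where "gg n = nat \<lceil>(c0 + real n * a * L) / lb\<rceil> + 1" for n :: nat
  define mm where "mm n = nat \<lceil>4 * real n * L * 2 powr (real n * a)\<rceil>" for n :: nat
  show ?thesis
  proof (intro exI[of _ "max 1 (nat \<lceil>X\<rceil>)"] allI impI)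
    fix n N and B :: "nat \<Rightarrow> real set"
    assume n: "max 1 (nat \<lceil>X\<rceil>) \<le> n" and N: "N \<le> 2 ^ n" and inj: "inj_on B {1..N}"
      and Bi: "\<forall>i \<in> {1..N}. unit_ball (B i) \<and> diameter (B i) = 2 powr (- real n)
                         \<and> measure \<nu> (B i) \<ge> 2 powr (- real n * (h - \<epsilon>))"
    define g where "g = gg n"
    define m where "m = mm n"
    define p where "p = 2 powr (- real n * a)"
    define K where "K = 2 powr (real n * h)"
    have n1: "n \<ge> 1" and nX: "real n \<ge> X" using n by linarith+
    have g1: "g \<ge> 1" unfolding g_def gg_def by simp
    have "- real n * a \<le> 0" using a0 by simp
    then have "2 powr (- real n * a) \<le> 2 powr 0" by (intro powr_mono) auto
    then have p0: "p > 0" "p \<le> 1" unfolding p_def by auto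
    have pa: "p * 2 powr (real n * a) = 1" unfolding p_def by (simp add: powr_add[symmetric])
    have "real g \<le> G0 + G1 * real n"
    proof -
      have "real g = real (nat \<lceil>(c0 + real n * a * L) / lb\<rceil>) + 1" unfolding g_def gg_def by simp
      also have "real (nat \<lceil>(c0 + real n * a * L) / lb\<rceil>) \<le> max 0 ((c0 + real n * a * L) / lb + 1)"
        by linarith
      also have "(c0 + real n * a * L) / lb \<le> \<bar>c0\<bar> / lb + G1 * real n"
      proof -
        have "c0 / lb \<le> \<bar>c0\<bar> / lb" using lb0 by (intro divide_right_mono) auto
        moreover have "real n * a * L / lb = G1 * real n" unfolding G1_def by simp
        ultimately show ?thesis by (simp add: add_divide_distrib)
      qed
      then have "max 0 ((c0 + real n * a * L) / lb + 1) \<le> G0 + G1 * real n - 1"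
        unfolding G0_def using lb0 G1 by (simp add: add_nonneg_nonneg)
      finally show ?thesis by simp
    qed
    moreover have "real m \<le> 4 * real n * L * 2 powr (real n * a) + 1" unfolding m_def mm_def
      by (rule nat_ceil_le) (use L0 in simp)
    ultimately have "real m * real g \<le> (4 * real n * L * 2 powr (real n * a) + 1) * (G0 + G1 * real n)"
      by (intro mult_mono) (use G0 G1 in auto)
    also have "\<dots> \<le> 2 powr (real n * a) * ((4 * real n * L + 1) * (G0 + G1 * real n))"
    proof -
      have "2 powr 0 \<le> 2 powr (real n * a)" using a0 by (intro powr_mono) auto
      then have "1 \<le> 2 powr (real n * a)" by simp
      then have "4 * real n * L * 2 powr (real n * a) + 1 \<le> 2 powr (real n * a) * (4 * real n * L + 1)"
        by (simp add: algebra_simps)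
      then have "(4 * real n * L * 2 powr (real n * a) + 1) * (G0 + G1 * real n)
         \<le> (2 powr (real n * a) * (4 * real n * L + 1)) * (G0 + G1 * real n)"
        using G0 G1 by (intro mult_right_mono) auto
      then show ?thesis by (simp add: mult.assoc)
    qed
    also have "\<dots> < 2 powr (real n * a) * 2 powr (real n * e)"
      using X[OF nX] by simp
    also have "\<dots> = K" unfolding K_def powr_add[symmetric] using a0(3)
      by (metis distrib_left)
    finally have mgK: "real (m * g) < K" by simp
    have cb: "C * \<beta> ^ g \<le> p / 2"
    proof -
      have "(c0 + real n * a * L) / lb \<le> real g" unfolding g_def gg_def by linarith
      then have "c0 + real n * a * L \<le> real g * lb" using lb0 by (simp add: pos_divide_le_eq)
      then have le: "real g * ln \<beta> \<le> - c0 - real n * a * L" unfolding lb_def by simp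
      have "\<beta> ^ g = exp (real g * ln \<beta>)" using C by (simp add: exp_of_nat_mult)
      also have "\<dots> \<le> exp (- c0 - real n * a * L)" using le by simp
      also have "- c0 - real n * a * L = (- c0) + (- real n * a) * L" by (simp add: algebra_simps)
      also have "exp \<dots> = exp (- c0) * exp ((- real n * a) * L)" by (rule exp_add)
      also have "exp ((- real n * a) * L) = p" unfolding p_def L_def powr_def by simp
      also have "exp (- c0) = inverse (2 * C)" unfolding c0_def using C by (simp add: exp_minus)
      finally have b1: "\<beta> ^ g \<le> inverse (2 * C) * p" .
      have "C * \<beta> ^ g \<le> C * (inverse (2 * C) * p)" using b1 C by (intro mult_left_mono) auto
      also have "C * (inverse (2 * C) * p) = p / 2" using C by (simp add: field_simps)
      finally show ?thesis .
    qed
    have qm: "(1 - p / 2) ^ m \<le> 2 powr (- 2 * real n)"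
    proof -
      have "(1 - p/2) ^ m \<le> exp (- p/2) ^ m"
        using p0 exp_ge_add_one_self[of "-p/2"] by (intro power_mono) auto
      also have "\<dots> = exp (real m * (- p / 2))" by (rule exp_of_nat_mult[symmetric])
      also have "real m * (- p / 2) \<le> - 2 * real n * L"
      proof -
        have "real m \<ge> 4 * real n * L * 2 powr (real n * a)" unfolding m_def mm_def by (rule nat_ceil_ge)
        then have "4 * real n * L * 2 powr (real n * a) * p \<le> real m * p" using p0
          by (intro mult_right_mono) auto
        moreover have "4 * real n * L * 2 powr (real n * a) * p = 4 * real n * L"
        proof -
          have pa': "2 powr (real n * a) * p = 1" using pa by (simp only: mult.commute)
          have "4 * real n * L * 2 powr (real n * a) * p = 4 * real n * L * (2 powr (real n * a) * p)"
            by (simp only: mult.assoc)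
          also have "\<dots> = 4 * real n * L" by (simp only: pa' mult_1_right)
          finally show ?thesis .
        qed
        ultimately show ?thesis by linarith
      qed
      then have "exp (real m * (- p / 2)) \<le> exp (- 2 * real n * L)" by simp
      also have "\<dots> = 2 powr (- 2 * real n)" unfolding L_def powr_def by simp
      finally show ?thesis .
    qed
    have each: "measure \<nu> (avoid T g (B i) m) \<le> 2 powr (- 2 * real n)" if i: "i \<in> {1..N}" for i
    proof -
      have ub: "unit_ball (B i)" and mB: "measure \<nu> (B i) \<ge> 2 powr (- real n * (h - \<epsilon>))" using Bi i by auto
      have "2 powr (- real n * (h - \<epsilon>)) \<ge> p" unfolding p_def using a0 by (intro powr_mono) (auto intro: mult_left_mono)
      then have mBp: "measure \<nu> (B i) \<ge> p" using mB by linarith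
      have q0: "0 \<le> 1 - measure \<nu> (B i) + C * \<beta> ^ g" using prob_le_1[of "B i"] C by simp
      have "measure \<nu> (avoid T g (B i) m) \<le> (1 - measure \<nu> (B i) + C * \<beta> ^ g) ^ m"
        by (rule avoid_bound[OF assms(1) ub C(1,2) mix g1])
      also have "\<dots> \<le> (1 - p/2) ^ m" using q0 mBp cb by (intro power_mono) auto
      finally show ?thesis using qm by linarith
    qed
    have sub: "C_set T n N h B \<subseteq> (\<Union>i\<in>{1..N}. avoid T g (B i) m)"
    proof
      fix x assume "x \<in> C_set T n N h B"
      then obtain i where i: "i \<in> {1..N}" and ht: "hitting_time T (B i) x \<ge> ereal K"
        unfolding C_set_def K_def by auto
      have "x \<in> avoid T g (B i) m" by (rule hit_avoid[OF ht mgK g1])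
      then show "x \<in> (\<Union>i\<in>{1..N}. avoid T g (B i) m)" using i by blast
    qed
    have As: "avoid T g (B i) m \<in> sets \<nu>" if "i \<in> {1..N}" for i
      using avoid_sets[OF Tm unit_ball_sets] Bi that se by auto
    have "measure \<nu> (C_set T n N h B) \<le> measure \<nu> (\<Union>i\<in>{1..N}. avoid T g (B i) m)"
      by (rule finite_measure_mono[OF sub]) (use As in auto)
    also have "\<dots> \<le> (\<Sum>i\<in>{1..N}. measure \<nu> (avoid T g (B i) m))"
      by (rule measure_UNION_le) (use As in auto)
    also have "\<dots> \<le> (\<Sum>i\<in>{1..N}. 2 powr (- 2 * real n))" by (rule sum_mono) (rule each)
    also have "\<dots> = real N * 2 powr (- 2 * real n)" by simp
    also have "\<dots> \<le> 2 ^ n * 2 powr (- 2 * real n)"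
    proof -
      have "real N \<le> real ((2::nat) ^ n)" using N by (simp only: of_nat_le_iff)
      then have "real N \<le> 2 ^ n" by simp
      then show ?thesis by (intro mult_right_mono) auto
    qed
    also have "\<dots> = 2 powr (- real n)"
    proof -
      have "(2::real) ^ n = 2 powr (real n)" by (simp add: powr_realpow)
      then have "(2::real) ^ n * 2 powr (- 2 * real n) = 2 powr (real n + - 2 * real n)"
        by (simp only: powr_add)
      also have "real n + - 2 * real n = - real n" by simp
      finally show ?thesis .
    qed
    finally show "measure \<nu> (C_set T n N h B) \<le> 2 powr (- real n)" .
  qed
qed

end
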